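(* Let $\alpha=(\alpha_1,\ldots,\alpha_n)$ be a composition, $\sigma\in S_n$, and $i\in\{1,\ldots,n-1\}$ with $\alpha_i=\alpha_{i+1}$. Let $T\in\mathrm{NAF}(\alpha,\sigma)$ and let $U=\Omega_{0,h}(T)$ for some $h\in\{0,\ldots,\alpha_i\}$, and suppose $U$ is non-attacking. Then $$\mathrm{wt}_{h}(U)\,(1-\rho_h(U))=\mathrm{wt}_{h}(T)\,(1-\rho_h(T)).$$
   Context: Permutations are in one-line notation; $\sigma s_i$ is $\sigma$ with the entries in positions $i,i+1$ exchanged. A composition is a sequence of nonnegative integers. The skyline diagram is $\mathrm{dg}(\alpha)=\{(j,r):1\le j\le n,\ 1\le r\le\alpha_j\}$ ($j$ = column, $r$ = row) and the augmented diagram is $\mathrm{adg}(\alpha)=\mathrm{dg}(\alpha)\cup\{(j,0):1\le j\le n\}$ (row $0$ is the basement). For $u=(j,r)\in\mathrm{dg}(\alpha)$: $\mathrm{south}(u)=(j,r-1)$; $\mathrm{leg}(u)=\alpha_j-r$; the left arm set is $\{(j',r-1)\in\mathrm{adg}(\alpha):j'<j,\ \alpha_{j'}<\alpha_j\}$, the right arm set is $\{(j',r)\in\mathrm{dg}(\alpha):j'>j,\ \alpha_{j'}\le\alpha_j\}$, $\mathrm{Arm}(u)$ is their union and $\mathrm{arm}(u)=|\mathrm{Arm}(u)|$. Two boxes of $\mathrm{adg}(\alpha)$ attack each other if they are in the same row, or in consecutive rows with the box in the higher row strictly to the right of the box in the lower row. A filling of shape $\alpha$ and basement $\tau\in S_n$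 is a map $T:\mathrm{adg}(\alpha)\to\{1,\ldots,n\}$ with $T(j,0)=\tau_j$; $\mathrm{NAF}(\alpha,\tau)$ is the set of non-attacking ones (attacking boxes have distinct entries). For integers $a,b$ let $\chi(a,b)=1$ if $a>b$ and $0$ otherwise, and $\chi(a,b,c)=\chi(a,b)+\chi(b,c)-\chi(a,c)$. For a non-attacking filling $T$: a descent is $u\in\mathrm{dg}(\alpha)$ with $T(u)>T(\mathrm{south}(u))$; a triple is $(u,v,w)$ with $u\in\mathrm{dg}(\alpha)$, $w=\mathrm{south}(u)$, $v\in\mathrm{Arm}(u)$, an inversion triple if $\chi(T(u),T(v),T(w))=1$ and a coinversion triple otherwise. For $r\ge0$, let $\mathrm{maj}_{r+1}(T)=\sum(\mathrm{leg}(u)+1)$ over descents $u$ in row $r+1$, let $\mathrm{coinv}_{r,r+1}(T)$ be the number of coinversion triples $(u,v,w)$ with $u$ in row $r+1$, and $\mathrm{wt}_r(T)=q^{\mathrm{maj}_{r+1}(T)}t^{\mathrm{coinv}_{r,r+1}(T)}\prod_{u\in\mathrm{dg}(\alpha)\text{ in row }r+1,\ T(u)\ne T(\mathrm{south}(u))}\frac{1-t}{1-q^{1+\mathrm{leg}(u)}t^{1+\mathrm{arm}(u)}}$ (empty sums are $0$, empty products $1$). Fix $i$ with $\alpha_i=\alpha_{i+1}$. For a filling $T$ and $0\le r\le\alpha_i$, $\mathrm{swap}_r(T)$ exchanges the entries of boxes $(i,r)$ and $(i+1,r)$, and $\Omega_{0,h}=\mathrm{swap}_h\circ\cdots\circ\mathrm{swap}_0$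 (so $\Omega_{0,h}(T)$ has basement $\sigma s_i$). For a non-attacking filling $T$ (any basement) and $0\le r\le\alpha_i-1$, let $a=T(i,r)$, $b=T(i+1,r)$, $c=T(i,r+1)$, $d=T(i+1,r+1)$, $A=\mathrm{arm}(i+1,r+1)$, $\ell=\mathrm{leg}(i+1,r+1)$, and define $\rho_r(T)\in\mathbb{Q}(q,t)$: if $a,b,c,d$ are distinct, $\rho_r(T)=0$ when $\chi(c,d,a)=\chi(c,d,b)$ and $\rho_r(T)=1$ when $\chi(c,d,a)=\chi(d,c,b)$; if exactly three of them are distinct, then $\rho_r(T)=0$ if $b=c$, $\rho_r(T)=1$ if $b=d$, and $\rho_r(T)=t^{1-\chi(d,a,b)}\frac{1-q^{\ell+1}t^{A+1}}{1-q^{\ell+1}t^{A+2}}$ if $a=c$; if $a=c$ and $b=d$, $\rho_r(T)=1$. By convention $\rho_{\alpha_i}(T)=0$. *)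

theory Defs
  imports Main "HOL-Computational_Algebra.Polynomial" "HOL-Computational_Algebra.Fraction_Field"
    "HOL-Combinatorics.Permutations"
begin

text \<open>A composition of length n is a function alpha :: nat => nat, of which only
the values alpha 1, ..., alpha n matter. Boxes are pairs (column, row). A filling is a function
T :: nat * nat => nat (only its values on the augmented diagram matter). A permutation
sigma in S_n is a function permuting {1..n}; one-line notation sigma_j = sigma j.\<close>

definition dg :: "nat \<Rightarrow> (nat \<Rightarrow> nat) \<Rightarrow> (nat \<times> nat) set" where
  "dg n \<alpha> = {(j, r). 1 \<le> j \<and> j \<le> n \<and> 1 \<le> r \<and> r \<le> \<alpha> j}"

definition adg :: "nat \<Rightarrow> (nat \<Rightarrow> nat) \<Rightarrow> (nat \<times> nat) set" where
  "adg n \<alpha> = dg n \<alpha> \<union> {(j, 0) | j. 1 \<le> j \<and> j \<le> n}"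

definition south :: "nat \<times> nat \<Rightarrow> nat \<times> nat" where
  "south u = (fst u, snd u - 1)"

definition leg :: "(nat \<Rightarrow> nat) \<Rightarrow> nat \<times> nat \<Rightarrow> nat" where
  "leg \<alpha> u = \<alpha> (fst u) - snd u"

definition left_arm :: "nat \<Rightarrow> (nat \<Rightarrow> nat) \<Rightarrow> nat \<times> nat \<Rightarrow> (nat \<times> nat) set" where
  "left_arm n \<alpha> u = {(j', r'). (j', r') \<in> adg n \<alpha> \<and> r' = snd u - 1 \<and> j' < fst u \<and> \<alpha> j' < \<alpha> (fst u)}"

definition right_arm :: "nat \<Rightarrow> (nat \<Rightarrow> nat) \<Rightarrow> nat \<times> nat \<Rightarrow> (nat \<times> nat) set" where
  "right_arm n \<alpha> u = {(j', r'). (j', r') \<in> dg n \<alpha> \<and> r' = snd u \<and> j' > fst u \<and> \<alpha> j' \<le> \<alpha> (fst u)}"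

definition Arm :: "nat \<Rightarrow> (nat \<Rightarrow> nat) \<Rightarrow> nat \<times> nat \<Rightarrow> (nat \<times> nat) set" where
  "Arm n \<alpha> u = left_arm n \<alpha> u \<union> right_arm n \<alpha> u"

definition arm :: "nat \<Rightarrow> (nat \<Rightarrow> nat) \<Rightarrow> nat \<times> nat \<Rightarrow> nat" where
  "arm n \<alpha> u = card (Arm n \<alpha> u)"

definition attacks :: "nat \<times> nat \<Rightarrow> nat \<times> nat \<Rightarrow> bool" where
  "attacks u v \<longleftrightarrow> u \<noteq> v \<and>
     (snd u = snd v
      \<or> (snd v = snd u + 1 \<and> fst v > fst u)
      \<or> (snd u = snd v + 1 \<and> fst u > fst v))"

definition nonattacking :: "nat \<Rightarrow> (nat \<Rightarrow> nat) \<Rightarrow> (nat \<times> nat \<Rightarrow> nat) \<Rightarrow> bool" where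
  "nonattacking n \<alpha> T \<longleftrightarrow>
     (\<forall>u \<in> adg n \<alpha>. \<forall>v \<in> adg n \<alpha>. attacks u v \<longrightarrow> T u \<noteq> T v)"

definition is_filling :: "nat \<Rightarrow> (nat \<Rightarrow> nat) \<Rightarrow> (nat \<Rightarrow> nat) \<Rightarrow> (nat \<times> nat \<Rightarrow> nat) \<Rightarrow> bool" where
  "is_filling n \<alpha> \<tau> T \<longleftrightarrow>
     (\<forall>u \<in> adg n \<alpha>. T u \<in> {1..n}) \<and> (\<forall>j. 1 \<le> j \<and> j \<le> n \<longrightarrow> T (j, 0) = \<tau> j)"

definition NAF :: "nat \<Rightarrow> (nat \<Rightarrow> nat) \<Rightarrow> (nat \<Rightarrow> nat) \<Rightarrow> (nat \<times> nat \<Rightarrow> nat) set" where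
  "NAF n \<alpha> \<tau> = {T. is_filling n \<alpha> \<tau> T \<and> nonattacking n \<alpha> T}"

definition chi :: "nat \<Rightarrow> nat \<Rightarrow> int" where
  "chi a b = (if a > b then 1 else 0)"

definition chi3 :: "nat \<Rightarrow> nat \<Rightarrow> nat \<Rightarrow> int" where
  "chi3 a b c = chi a b + chi b c - chi a c"

definition maj_row :: "nat \<Rightarrow> (nat \<Rightarrow> nat) \<Rightarrow> (nat \<times> nat \<Rightarrow> nat) \<Rightarrow> nat \<Rightarrow> nat" where
  "maj_row n \<alpha> T r =
     (\<Sum>j \<in> {j. (j, r + 1) \<in> dg n \<alpha> \<and> T (j, r + 1) > T (south (j, r + 1))}. leg \<alpha> (j, r + 1) + 1)"

text \<open>Coinversion triples (u, v, w) with u in row r+1: represented by the pair (u, v).\<close>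
definition coinv_row :: "nat \<Rightarrow> (nat \<Rightarrow> nat) \<Rightarrow> (nat \<times> nat \<Rightarrow> nat) \<Rightarrow> nat \<Rightarrow> nat" where
  "coinv_row n \<alpha> T r =
     card {(u, v). u \<in> dg n \<alpha> \<and> snd u = r + 1 \<and> v \<in> Arm n \<alpha> u
                   \<and> chi3 (T u) (T v) (T (south u)) \<noteq> 1}"

definition wt :: "'a::field \<Rightarrow> 'a \<Rightarrow> nat \<Rightarrow> (nat \<Rightarrow> nat) \<Rightarrow> (nat \<times> nat \<Rightarrow> nat) \<Rightarrow> nat \<Rightarrow> 'a" where
  "wt q t n \<alpha> T r =
     q ^ maj_row n \<alpha> T r * t ^ coinv_row n \<alpha> T r *
     (\<Prod>j \<in> {j. (j, r + 1) \<in> dg n \<alpha> \<and> T (j, r + 1) \<noteq> T (south (j, r + 1))}.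
        (1 - t) / (1 - q ^ (1 + leg \<alpha> (j, r + 1)) * t ^ (1 + arm n \<alpha> (j, r + 1))))"

definition swap_row :: "nat \<Rightarrow> nat \<Rightarrow> (nat \<times> nat \<Rightarrow> nat) \<Rightarrow> (nat \<times> nat \<Rightarrow> nat)" where
  "swap_row i r T = T((i, r) := T (i + 1, r), (i + 1, r) := T (i, r))"

fun Omega :: "nat \<Rightarrow> nat \<Rightarrow> (nat \<times> nat \<Rightarrow> nat) \<Rightarrow> (nat \<times> nat \<Rightarrow> nat)" where
  "Omega i 0 T = swap_row i 0 T"
| "Omega i (Suc h) T = swap_row i (Suc h) (Omega i h T)"

text \<open>rho_r(T); the final "else 0" branches are cases that cannot occur for
non-attacking fillings.\<close>
definition rho :: "'a::field \<Rightarrow> 'a \<Rightarrow> nat \<Rightarrow> (nat \<Rightarrow> nat) \<Rightarrow> nat \<Rightarrow> (nat \<times> nat \<Rightarrow> nat) \<Rightarrow> nat \<Rightarrow> 'a" where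
  "rho q t n \<alpha> i T r =
    (let a = T (i, r); b = T (i + 1, r); c = T (i, r + 1); d = T (i + 1, r + 1);
         A = arm n \<alpha> (i + 1, r + 1); l = leg \<alpha> (i + 1, r + 1)
     in if r \<ge> \<alpha> i then 0
        else if card {a, b, c, d} = 4 then
          (if chi3 c d a = chi3 c d b then 0
           else if chi3 c d a = chi3 d c b then 1 else 0)
        else if card {a, b, c, d} = 3 then
          (if b = c then 0
           else if b = d then 1
           else if a = c then
             t powi (1 - chi3 d a b) * ((1 - q ^ (l + 1) * t ^ (A + 1)) / (1 - q ^ (l + 1) * t ^ (A + 2)))
           else 0)
        else if a = c \<and> b = d then 1
        else 0)"

text \<open>The field Q(q,t) of rational functions: fractions of bivariate rational polynomials
(outer variable q, inner variable t).\<close>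
definition qQ :: "rat poly poly fract" where
  "qQ = Fract [:0, 1:] 1"

definition tQ :: "rat poly poly fract" where
  "tQ = Fract [:[:0, 1:]:] 1"

end

theory Submission
  imports Defs
begin

lemma Fract_pow1: "(Fract (a::'a::idom) 1) ^ m = Fract (a ^ m) 1"
  by (induct m) (simp_all add: One_fract_def)

lemma qQ_nz: "qQ \<noteq> 0" by (simp add: qQ_def Zero_fract_def eq_fract)
lemma tQ_nz: "tQ \<noteq> 0" by (simp add: tQ_def Zero_fract_def eq_fract)

lemma den_nz: "m \<ge> 1 \<Longrightarrow> 1 - qQ ^ m * tQ ^ k \<noteq> 0"
proof
  assume m: "m \<ge> 1" and h: "1 - qQ ^ m * tQ ^ k = 0"
  let ?p = "[:0, 1:] ^ m * [:[:0, 1:]:] ^ k :: rat poly poly"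
  have eq: "qQ ^ m * tQ ^ k = Fract ?p 1"
    by (simp add: qQ_def tQ_def Fract_pow1)
  have e: "qQ ^ m * tQ ^ k = 1" using h by simp
  have "Fract ?p 1 = Fract 1 1" using e eq by (metis One_fract_def)
  hence "?p = 1" by (simp add: eq_fract)
  moreover have "degree ?p = m"
    by (simp add: degree_mult_eq degree_power_eq)
  ultimately show False using m by simp
qed

lemma Omega_val: "Omega i h T (j, r) = (if r \<le> h then T (if j = i then i+1 else if j = i+1 then i else j, r) else T (j, r))"
  by (induct h arbitrary: j r) (auto simp: swap_row_def)

definition chn :: "nat \<Rightarrow> nat \<Rightarrow> nat" where "chn x y = (if x > y then 1 else 0)"
definition EE :: "'a::field \<Rightarrow> nat \<Rightarrow> nat \<Rightarrow> nat \<Rightarrow> 'a" where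
  "EE t p x r = (if chi3 p x r \<noteq> 1 then t else 1)"

definition rhoL :: "'a::field \<Rightarrow> 'a \<Rightarrow> nat \<Rightarrow> nat \<Rightarrow> nat \<Rightarrow> nat \<Rightarrow> nat \<Rightarrow> nat \<Rightarrow> 'a" where
  "rhoL q t a b c d A l =
       (if card {a, b, c, d} = 4 then
          (if chi3 c d a = chi3 c d b then 0
           else if chi3 c d a = chi3 d c b then 1 else 0)
        else if card {a, b, c, d} = 3 then
          (if b = c then 0
           else if b = d then 1
           else if a = c then
             t powi (1 - chi3 d a b) * ((1 - q ^ (l + 1) * t ^ (A + 1)) / (1 - q ^ (l + 1) * t ^ (A + 2)))
           else 0)
        else if a = c \<and> b = d then 1
        else 0)"

lemma chi3_01: "chi3 x y z = 0 \<or> chi3 x y z = 1"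
  by (auto simp: chi3_def chi_def)

lemma chi3_swap: "c \<noteq> d \<Longrightarrow> chi3 d c z = 1 - chi3 c d z"
  by (auto simp: chi3_def chi_def)

lemma rhoL_distinct:
  assumes "a \<noteq> b" "a \<noteq> c" "a \<noteq> d" "b \<noteq> c" "b \<noteq> d" "c \<noteq> d"
  shows "rhoL q t a b c d A l = (if chi3 c d a = chi3 c d b then 0 else 1)"
proof -
  have "card {a, b, c, d} = 4" using assms by simp
  moreover have "chi3 c d a \<noteq> chi3 c d b \<Longrightarrow> chi3 c d a = chi3 d c b"
    using chi3_swap[OF assms(6), of b] chi3_01[of c d a] chi3_01[of c d b] by auto
  ultimately show ?thesis by (simp add: rhoL_def)
qed

lemma rhoL_bc:
  assumes "a \<noteq> b" "b = c" "a \<noteq> d" "c \<noteq> d"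
  shows "rhoL q t a b c d A l = 0"
proof -
  have "card {a, b, c, d} = 3" using assms by simp
  thus ?thesis using assms by (simp add: rhoL_def)
qed

lemma rhoL_ac:
  assumes "a \<noteq> b" "a = c" "b \<noteq> d" "c \<noteq> d"
  shows "rhoL q t a b c d A l = t powi (1 - chi3 d a b) * ((1 - q ^ (l + 1) * t ^ (A + 1)) / (1 - q ^ (l + 1) * t ^ (A + 2)))"
proof -
  have "card {a, b, c, d} = 3" using assms by (simp add: insert_commute)
  thus ?thesis using assms by (simp add: rhoL_def)
qed

lemma core_bc:
  fixes q t PT PU :: "'a::field"
  assumes nz: "q \<noteq> 0" "t \<noteq> 0" "1 - q^(l+1)*t^(A+2) \<noteq> 0"
    and ne: "a \<noteq> b" "b \<noteq> d" "a \<noteq> d"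
    and R: "PT * t^(A*(chn b b + chn d a)) = PU * t^(A*(chn b a + chn d b))"
  shows "(if b > b then q^(l+1) else 1) * (if d > a then q^(l+1) else 1) * EE t b d b * PU
          * (if b \<noteq> b then (1-t)/(1 - q^(1+l)*t^(1+(A+1))) else 1)
          * (if d \<noteq> a then (1-t)/(1 - q^(1+l)*t^(1+A)) else 1) * (1 - rhoL q t b a b d A l)
       = (if b > a then q^(l+1) else 1) * (if d > b then q^(l+1) else 1) * EE t b d a * PT
          * (if b \<noteq> a then (1-t)/(1 - q^(1+l)*t^(1+(A+1))) else 1)
          * (if d \<noteq> b then (1-t)/(1 - q^(1+l)*t^(1+A)) else 1) * (1 - rhoL q t a b b d A l)"
proof -
  have rU: "rhoL q t b a b d A l = t powi (1 - chi3 d b a) * ((1 - q ^ (l + 1) * t ^ (A + 1)) / (1 - q ^ (l + 1) * t ^ (A + 2)))"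
    using ne by (intro rhoL_ac) auto
  have rT: "rhoL q t a b b d A l = 0" using ne by (intro rhoL_bc) auto
  have E1: "EE t b d b = 1" using ne by (simp add: EE_def chi3_def chi_def)
  have d3: "1 - q^(1+l)*t^(1+(A+1)) = 1 - q^(l+1)*t^(A+2)" by (simp add: algebra_simps)
  have d2: "1 - q^(1+l)*t^(1+A) = 1 - q^(l+1)*t^(A+1)" by (simp add: algebra_simps)
  define D1 where "D1 = (1-t)/(1 - q^(l+1)*t^(A+2))"
  define D2 where "D2 = (1-t)/(1 - q^(l+1)*t^(A+1))"
  have c01: "chi3 d b a = 0 \<or> chi3 d b a = 1" by (rule chi3_01)
  then show ?thesis
  proof
    assume ch: "chi3 d b a = 1"
    hence ch': "chi3 b d a = 0" using chi3_swap[of d b a] ne by simp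
    have cn: "chn b a + chn d b = chn d a + 1" using ch ne by (auto simp: chi3_def chi_def chn_def split: if_splits)
    have "PT * t^(A*chn d a) = (PU * t^A) * t^(A*chn d a)"
      using R cn by (simp add: chn_def[of b b] power_add algebra_simps)
    hence P: "PT = PU * t^A" using nz by simp
    have r1: "1 - rhoL q t b a b d A l = q^(l+1)*t^(A+1)*D1"
      using rU ch nz unfolding D1_def by (simp add: field_simps)
    show ?thesis unfolding r1 rT d3 d2 D1_def[symmetric] D2_def[symmetric] using ch ch' ne E1 P cn
      by (cases "a<b"; cases "b<d"; cases "a<d"; simp add: EE_def ac_simps power_add chn_def)
  next
    assume ch: "chi3 d b a = 0"
    hence ch': "chi3 b d a = 1" using chi3_swap[of d b a] ne by simp
    have cn: "chn b a + chn d b = chn d a" using ch ne by (auto simp: chi3_def chi_def chn_def split: if_splits)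
    have P: "PT = PU" using R cn nz by (simp add: chn_def[of b b])
    have r1: "1 - rhoL q t b a b d A l = D1"
      using rU ch nz unfolding D1_def by (simp add: field_simps)
    show ?thesis unfolding r1 rT d3 d2 D1_def[symmetric] D2_def[symmetric] using ch ch' ne E1 P cn
      by (cases "a<b"; cases "b<d"; cases "a<d"; simp add: EE_def ac_simps power_add chn_def)
  qed
qed

lemma finite_Arm: "finite (Arm n \<alpha> u)"
proof -
  have "Arm n \<alpha> u \<subseteq> {1..n} \<times> {snd u - 1, snd u}"
    by (auto simp: Arm_def left_arm_def right_arm_def adg_def dg_def)
  thus ?thesis by (rule finite_subset) auto
qed

lemma finite_J: "finite {j. (j, r) \<in> dg n \<alpha>}"
  by (rule finite_subset[of _ "{1..n}"]) (auto simp: dg_def)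

definition W :: "'a::field \<Rightarrow> 'a \<Rightarrow> nat \<Rightarrow> (nat \<Rightarrow> nat) \<Rightarrow> (nat \<times> nat \<Rightarrow> nat) \<Rightarrow> nat \<Rightarrow> nat \<Rightarrow> 'a" where
  "W q t n \<alpha> F h j =
     (if F (j, h+1) > F (j, h) then q ^ (leg \<alpha> (j, h+1) + 1) else 1) *
     (\<Prod>v\<in>Arm n \<alpha> (j, h+1). EE t (F (j, h+1)) (F v) (F (j, h))) *
     (if F (j, h+1) \<noteq> F (j, h) then (1 - t) / (1 - q ^ (1 + leg \<alpha> (j, h+1)) * t ^ (1 + arm n \<alpha> (j, h+1))) else 1)"

lemma wt_prod: "wt q t n \<alpha> F h = (\<Prod>j\<in>{j. (j, h+1) \<in> dg n \<alpha>}. W q t n \<alpha> F h j)"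
proof -
  define J where "J = {j. (j, h+1) \<in> dg n \<alpha>}"
  have fJ: "finite J" unfolding J_def by (rule finite_J)
  have s1: "{j. (j, h + 1) \<in> dg n \<alpha> \<and> F (j, h + 1) > F (south (j, h + 1))} = {j\<in>J. F (j, h+1) > F (j, h)}"
    by (auto simp: J_def south_def)
  have M: "q ^ maj_row n \<alpha> F h = (\<Prod>j\<in>J. if F (j, h+1) > F (j, h) then q ^ (leg \<alpha> (j, h+1) + 1) else 1)"
    unfolding maj_row_def s1 power_sum by (rule prod.inter_filter[OF fJ])
  define P where "P j v \<longleftrightarrow> chi3 (F (j, h+1)) (F v) (F (j, h)) \<noteq> 1" for j v
  have S: "{(u, v). u \<in> dg n \<alpha> \<and> snd u = h + 1 \<and> v \<in> Arm n \<alpha> u \<and> chi3 (F u) (F v) (F (south u)) \<noteq> 1}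
      = (\<lambda>(j, v). ((j, h+1), v)) ` (SIGMA j:J. {v\<in>Arm n \<alpha> (j, h+1). P j v})"
    by (auto simp: J_def P_def south_def image_iff)
  have "inj_on (\<lambda>(j, v). ((j, h+1), v)) (SIGMA j:J. {v\<in>Arm n \<alpha> (j, h+1). P j v})"
    by (auto simp: inj_on_def)
  hence C: "coinv_row n \<alpha> F h = (\<Sum>j\<in>J. card {v\<in>Arm n \<alpha> (j, h+1). P j v})"
    unfolding coinv_row_def S using fJ finite_Arm
    by (simp add: card_image card_SigmaI)
  have C2: "t ^ coinv_row n \<alpha> F h = (\<Prod>j\<in>J. \<Prod>v\<in>Arm n \<alpha> (j, h+1). EE t (F (j, h+1)) (F v) (F (j, h)))"
  proof -
    have "t ^ card {v\<in>Arm n \<alpha> (j, h+1). P j v} = (\<Prod>v\<in>Arm n \<alpha> (j, h+1). EE t (F (j, h+1)) (F v) (F (j, h)))" for j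
    proof -
      have "t ^ card {v\<in>Arm n \<alpha> (j, h+1). P j v} = (\<Prod>v\<in>{v\<in>Arm n \<alpha> (j, h+1). P j v}. t)" by simp
      also have "\<dots> = (\<Prod>v\<in>Arm n \<alpha> (j, h+1). if P j v then t else 1)"
        using finite_Arm by (rule prod.inter_filter)
      finally show ?thesis by (simp add: EE_def P_def)
    qed
    thus ?thesis unfolding C power_sum by simp
  qed
  have s3: "{j. (j, h + 1) \<in> dg n \<alpha> \<and> F (j, h + 1) \<noteq> F (south (j, h + 1))} = {j\<in>J. F (j, h+1) \<noteq> F (j, h)}"
    by (auto simp: J_def south_def)
  have D: "(\<Prod>j\<in>{j. (j, h + 1) \<in> dg n \<alpha> \<and> F (j, h + 1) \<noteq> F (south (j, h + 1))}.
        (1 - t) / (1 - q ^ (1 + leg \<alpha> (j, h + 1)) * t ^ (1 + arm n \<alpha> (j, h + 1))))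
      = (\<Prod>j\<in>J. if F (j, h+1) \<noteq> F (j, h) then (1 - t) / (1 - q ^ (1 + leg \<alpha> (j, h+1)) * t ^ (1 + arm n \<alpha> (j, h+1))) else 1)"
    unfolding s3 using fJ by (rule prod.inter_filter)
  show ?thesis unfolding wt_def M C2 D W_def J_def[symmetric] prod.distrib ..
qed

definition XL :: "'a::field \<Rightarrow> 'a \<Rightarrow> nat \<Rightarrow> nat \<Rightarrow> nat \<Rightarrow> nat \<Rightarrow> nat \<Rightarrow> nat \<Rightarrow> 'a \<Rightarrow> 'a" where
  "XL q t l A c a d b P = (if c > a then q^(l+1) else 1) * (if d > b then q^(l+1) else 1) * EE t c d a * P
          * (if c \<noteq> a then (1-t)/(1 - q^(1+l)*t^(1+(A+1))) else 1)
          * (if d \<noteq> b then (1-t)/(1 - q^(1+l)*t^(1+A)) else 1)"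

lemma core:
  fixes q t PT PU :: "'a::field"
  assumes nz: "q \<noteq> 0" "t \<noteq> 0" "1 - q^(l+1)*t^(A+2) \<noteq> 0"
    and ne: "a \<noteq> b" "c \<noteq> d" "a \<noteq> d" "b \<noteq> d"
    and R: "PT * t^(A*(chn c b + chn d a)) = PU * t^(A*(chn c a + chn d b))"
  shows "XL q t l A c b d a PU * (1 - rhoL q t b a c d A l) = XL q t l A c a d b PT * (1 - rhoL q t a b c d A l)"
proof -
  consider "c = b" | "c = a" | "c \<noteq> a" "c \<noteq> b" by blast
  then show ?thesis
  proof cases
    case 1
    show ?thesis unfolding XL_def 1 using core_bc[OF nz ne(1) ne(4) ne(3), of PT PU] R 1 by simp
  next
    case 2
    have "XL q t l A c a d b PT * (1 - rhoL q t a b c d A l) = XL q t l A c b d a PU * (1 - rhoL q t b a c d A l)"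
      unfolding XL_def 2 using core_bc[OF nz ne(1)[symmetric] ne(3) ne(4), of PU PT] R 2 by simp
    thus ?thesis by simp
  next
    case 3
    have rT: "rhoL q t a b c d A l = (if chi3 c d a = chi3 c d b then 0 else 1)"
      using ne 3 by (intro rhoL_distinct) auto
    have rU: "rhoL q t b a c d A l = (if chi3 c d b = chi3 c d a then 0 else 1)"
      using ne 3 by (intro rhoL_distinct) auto
    show ?thesis
    proof (cases "chi3 c d a = chi3 c d b")
      case True
      hence cn: "chn c b + chn d a = chn c a + chn d b"
        by (auto simp: chi3_def chi_def chn_def split: if_splits)
      hence "PT = PU" using R nz by simp
      then show ?thesis using rT rU True 3 ne cn unfolding XL_def
        by (cases "c > a"; cases "c > b"; cases "d > a"; cases "d > b"; simp add: EE_def chn_def)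
    next
      case False
      then show ?thesis using rT rU by simp
    qed
  qed
qed

lemma EE_pow: "EE t p x r = t ^ (if chi3 p x r \<noteq> 1 then 1 else 0)"
  by (simp add: EE_def)

lemma perx: "EE t c x a * EE t d x b * t^(chn c b + chn d a) = EE t c x b * EE t d x a * t^(chn c a + chn d b)"
proof -
  have "(if chi3 c x a \<noteq> 1 then 1 else 0) + (if chi3 d x b \<noteq> 1 then 1 else 0) + (chn c b + chn d a)
      = (if chi3 c x b \<noteq> 1 then 1 else 0) + (if chi3 d x a \<noteq> 1 then 1 else 0) + (chn c a + chn d b)"
    by (auto simp: chi3_def chi_def chn_def split: if_splits)
  hence "t ^ ((if chi3 c x a \<noteq> 1 then 1 else 0) + (if chi3 d x b \<noteq> 1 then 1 else 0) + (chn c b + chn d a))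
      = t ^ ((if chi3 c x b \<noteq> 1 then 1 else 0) + (if chi3 d x a \<noteq> 1 then 1 else 0) + (chn c a + chn d b))"
    by simp
  thus ?thesis unfolding EE_pow power_add by simp
qed

lemma prodR:
  assumes "finite S"
  shows "(\<Prod>v\<in>S. EE t c (f v) a * EE t d (f v) b) * t^(card S*(chn c b + chn d a))
       = (\<Prod>v\<in>S. EE t c (f v) b * EE t d (f v) a) * t^(card S*(chn c a + chn d b))"
proof -
  have "(\<Prod>v\<in>S. EE t c (f v) a * EE t d (f v) b * t^(chn c b + chn d a))
      = (\<Prod>v\<in>S. EE t c (f v) b * EE t d (f v) a * t^(chn c a + chn d b))"
    by (rule prod.cong[OF refl], rule perx)
  moreover have e: "\<And>k. t^(card S * k) = (t^k)^card S"
    by (metis mult.commute power_mult)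
  ultimately show ?thesis unfolding e by (simp add: prod.distrib)
qed

lemma rho_rhoL: "rho q t n \<alpha> i F r = (if r \<ge> \<alpha> i then 0 else
   rhoL q t (F (i, r)) (F (i+1, r)) (F (i, r+1)) (F (i+1, r+1)) (arm n \<alpha> (i+1, r+1)) (leg \<alpha> (i+1, r+1)))"
  unfolding rho_def rhoL_def Let_def by simp

lemma pairW:
  fixes q t :: "'a::field"
  assumes AI: "Arm n \<alpha> (i, h+1) = insert (i+1, h+1) AR" and nin: "(i+1, h+1) \<notin> AR"
    and fin: "finite AR" and lg: "leg \<alpha> (i, h+1) = l" "leg \<alpha> (i+1, h+1) = l"
    and ar: "arm n \<alpha> (i, h+1) = card AR + 1" "arm n \<alpha> (i+1, h+1) = card AR"
    and AR: "Arm n \<alpha> (i+1, h+1) = AR"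
    and vals: "F (i, h+1) = c" "F (i+1, h+1) = d" "F (i, h) = x" "F (i+1, h) = y"
    and same: "\<And>v. v \<in> AR \<Longrightarrow> F v = T v"
  shows "W q t n \<alpha> F h i * W q t n \<alpha> F h (i+1)
       = XL q t l (card AR) c x d y (\<Prod>v\<in>AR. EE t c (T v) x * EE t d (T v) y)"
proof -
  have p1: "(\<Prod>v\<in>Arm n \<alpha> (i, h+1). EE t (F (i, h+1)) (F v) (F (i, h)))
     = EE t c d x * (\<Prod>v\<in>AR. EE t c (T v) x)"
    unfolding AI using fin nin vals same by (simp add: prod.insert)
  have p2: "(\<Prod>v\<in>Arm n \<alpha> (i+1, h+1). EE t (F (i+1, h+1)) (F v) (F (i+1, h)))
     = (\<Prod>v\<in>AR. EE t d (T v) y)"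
    unfolding AR using vals same by simp
  show ?thesis
    unfolding W_def p1 p2 XL_def prod.distrib using vals lg ar
    by (simp add: ac_simps)
qed

theorem lemma3p11:
  fixes n i h :: nat and \<alpha> \<sigma> :: "nat \<Rightarrow> nat" and T U :: "nat \<times> nat \<Rightarrow> nat"
  assumes "\<sigma> permutes {1..n}"
    and "1 \<le> i" and "i < n"
    and "\<alpha> i = \<alpha> (i + 1)"
    and "T \<in> NAF n \<alpha> \<sigma>"
    and "h \<le> \<alpha> i"
    and "U = Omega i h T"
    and "nonattacking n \<alpha> U"
  shows "wt qQ tQ n \<alpha> U h * (1 - rho qQ tQ n \<alpha> i U h)
       = wt qQ tQ n \<alpha> T h * (1 - rho qQ tQ n \<alpha> i T h)"
proof -
  note i1 = assms(2) and i2 = assms(3) and al = assms(4) and hle = assms(6)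
  define swc where "swc j = (if j = i then i+1 else if j = i+1 then i else j)" for j
  define sg where "sg v = (if snd v \<le> h then (swc (fst v), snd v) else v)" for v :: "nat \<times> nat"
  have Uv: "U v = T (sg v)" for v
    using assms(7) by (cases v) (simp add: Omega_val sg_def swc_def)
  have NT: "nonattacking n \<alpha> T" using assms(5) by (simp add: NAF_def)
  have NU: "nonattacking n \<alpha> U" by (rule assms(8))
  have swc_al: "\<alpha> (swc j) = \<alpha> j" for j using al by (simp add: swc_def)
  have swc_rng: "1 \<le> swc j \<and> swc j \<le> n \<longleftrightarrow> 1 \<le> j \<and> j \<le> n" for j
    using i1 i2 by (auto simp: swc_def)
  have sgsg: "sg (sg v) = v" for v by (cases v) (auto simp: sg_def swc_def)
  have sg_in: "sg v \<in> Arm n \<alpha> (j, h+1)" if "v \<in> Arm n \<alpha> (j, h+1)" "j \<noteq> i" "j \<noteq> i+1" for v j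
  proof -
    obtain j' r' where v: "v = (j', r')" by (cases v)
    have lt: "swc j' < j \<longleftrightarrow> j' < j" using that(2,3) by (auto simp: swc_def)
    show ?thesis using that(1) swc_al[of j'] swc_rng[of j'] lt
      by (auto simp: v sg_def Arm_def left_arm_def right_arm_def adg_def dg_def)
  qed
  have sg_img: "sg ` Arm n \<alpha> (j, h+1) = Arm n \<alpha> (j, h+1)" if "j \<noteq> i" "j \<noteq> i+1" for j
  proof
    show "sg ` Arm n \<alpha> (j, h+1) \<subseteq> Arm n \<alpha> (j, h+1)" using sg_in that by auto
    show "Arm n \<alpha> (j, h+1) \<subseteq> sg ` Arm n \<alpha> (j, h+1)"
    proof
      fix v assume "v \<in> Arm n \<alpha> (j, h+1)"
      hence "sg v \<in> Arm n \<alpha> (j, h+1)" using sg_in that by auto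
      thus "v \<in> sg ` Arm n \<alpha> (j, h+1)" using sgsg[of v] by (metis image_eqI)
    qed
  qed
  have inj_sg: "inj_on sg X" for X by (metis inj_onI sgsg)
  have WJ0: "W qQ tQ n \<alpha> U h j = W qQ tQ n \<alpha> T h j" if "j \<noteq> i" "j \<noteq> i+1" for j
  proof -
    have e1: "U (j, h+1) = T (j, h+1)" "U (j, h) = T (j, h)" using that by (simp_all add: Uv sg_def swc_def)
    have "(\<Prod>v\<in>Arm n \<alpha> (j, h+1). EE tQ (T (j, h+1)) (U v) (T (j, h)))
        = (\<Prod>v\<in>sg ` Arm n \<alpha> (j, h+1). EE tQ (T (j, h+1)) (T v) (T (j, h)))"
      by (simp add: Uv prod.reindex[OF inj_sg])
    also have "\<dots> = (\<Prod>v\<in>Arm n \<alpha> (j, h+1). EE tQ (T (j, h+1)) (T v) (T (j, h)))"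
      using sg_img[OF that] by simp
    finally show ?thesis unfolding W_def e1 by simp
  qed
  define J where "J = {j. (j, h+1) \<in> dg n \<alpha>}"
  have fJ: "finite J" unfolding J_def by (rule finite_J)
  show ?thesis
  proof (cases "h = \<alpha> i")
    case True
    have nJ: "j \<noteq> i" "j \<noteq> i+1" if "j \<in> J" for j
      using that True al by (auto simp: J_def dg_def)
    have "wt qQ tQ n \<alpha> U h = wt qQ tQ n \<alpha> T h"
      unfolding wt_prod J_def[symmetric] using nJ WJ0 by (intro prod.cong) auto
    moreover have "rho qQ tQ n \<alpha> i U h = 0" "rho qQ tQ n \<alpha> i T h = 0"
      using True by (simp_all add: rho_rhoL)
    ultimately show ?thesis by simp
  next
    case False
    hence hl: "h < \<alpha> i" using hle by simp
    define J0 where "J0 = J - {i, i+1}"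
    have Jeq: "J = insert i (insert (i+1) J0)"
      using hl al i1 i2 by (auto simp: J_def J0_def dg_def)
    have fJ0: "finite J0" using fJ by (simp add: J0_def)
    have ni: "i \<notin> insert (i+1) J0" "i+1 \<notin> J0" by (auto simp: J0_def)
    have wtF: "wt qQ tQ n \<alpha> F h = (\<Prod>j\<in>J0. W qQ tQ n \<alpha> F h j) * (W qQ tQ n \<alpha> F h i * W qQ tQ n \<alpha> F h (i+1))" for F
      unfolding wt_prod J_def[symmetric] Jeq using fJ0 ni by (simp add: ac_simps)
    have P0: "(\<Prod>j\<in>J0. W qQ tQ n \<alpha> U h j) = (\<Prod>j\<in>J0. W qQ tQ n \<alpha> T h j)"
      using WJ0 by (intro prod.cong) (auto simp: J0_def)
    define AR where "AR = Arm n \<alpha> (i+1, h+1)"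
    define A where "A = card AR"
    define l where "l = leg \<alpha> (i+1, h+1)"
    have finAR: "finite AR" unfolding AR_def by (rule finite_Arm)
    have ltj: "j < i" if "j < Suc i" "\<alpha> j < \<alpha> (Suc i)" for j
      using that al by (cases "j = i") auto
    have AI: "Arm n \<alpha> (i, h+1) = insert (i+1, h+1) AR"
      using hl al i1 i2 ltj unfolding AR_def
      by (auto simp: Arm_def left_arm_def right_arm_def adg_def dg_def)
    have nin: "(i+1, h+1) \<notin> AR" by (auto simp: AR_def Arm_def left_arm_def right_arm_def)
    have lg: "leg \<alpha> (i, h+1) = l" "leg \<alpha> (i+1, h+1) = l" using al by (simp_all add: leg_def l_def)
    have ar: "arm n \<alpha> (i, h+1) = card AR + 1" "arm n \<alpha> (i+1, h+1) = card AR"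
      using AI nin finAR by (simp_all add: arm_def AR_def)
    have ARfix: "U v = T v" if "v \<in> AR" for v
    proof -
      have "snd v \<le> h \<Longrightarrow> fst v \<noteq> i \<and> fst v \<noteq> i+1"
        using that al by (auto simp: AR_def Arm_def left_arm_def right_arm_def)
      thus ?thesis by (cases v) (auto simp: Uv sg_def swc_def)
    qed
    define a where "a = T (i, h)"
    define b where "b = T (i+1, h)"
    define c where "c = T (i, h+1)"
    define d where "d = T (i+1, h+1)"
    have Uvals: "U (i, h) = b" "U (i+1, h) = a" "U (i, h+1) = c" "U (i+1, h+1) = d"
      unfolding Uv sg_def swc_def a_def b_def c_def d_def by auto
    have WT: "W qQ tQ n \<alpha> T h i * W qQ tQ n \<alpha> T h (i+1)
       = XL qQ tQ l A c a d b (\<Prod>v\<in>AR. EE tQ c (T v) a * EE tQ d (T v) b)"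
      unfolding A_def by (rule pairW[OF AI nin finAR lg ar AR_def[symmetric]]) (simp_all add: a_def b_def c_def d_def)
    have WU: "W qQ tQ n \<alpha> U h i * W qQ tQ n \<alpha> U h (i+1)
       = XL qQ tQ l A c b d a (\<Prod>v\<in>AR. EE tQ c (T v) b * EE tQ d (T v) a)"
      unfolding A_def by (rule pairW[OF AI nin finAR lg ar AR_def[symmetric]]) (simp_all only: Uvals ARfix)
    have rT: "rho qQ tQ n \<alpha> i T h = rhoL qQ tQ a b c d A l"
      unfolding rho_rhoL ar(2) A_def[symmetric] l_def[symmetric] a_def[symmetric] b_def[symmetric]
        c_def[symmetric] d_def[symmetric] using hl by simp
    have rU: "rho qQ tQ n \<alpha> i U h = rhoL qQ tQ b a c d A l"
      unfolding rho_rhoL ar(2) A_def[symmetric] l_def[symmetric] Uvals using hl by simp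
    have inadg: "(i, h) \<in> adg n \<alpha>" "(i+1, h) \<in> adg n \<alpha>" "(i, h+1) \<in> adg n \<alpha>" "(i+1, h+1) \<in> adg n \<alpha>"
      using hl al i1 i2 by (auto simp: adg_def dg_def)
    have ne: "a \<noteq> b" "c \<noteq> d" "a \<noteq> d" "b \<noteq> d"
    proof -
      have "attacks (i, h) (i+1, h)" by (simp add: attacks_def)
      thus "a \<noteq> b" using NT inadg(1,2) unfolding nonattacking_def a_def b_def by blast
      have "attacks (i, h+1) (i+1, h+1)" by (simp add: attacks_def)
      thus "c \<noteq> d" using NT inadg(3,4) unfolding nonattacking_def c_def d_def by blast
      have "attacks (i, h) (i+1, h+1)" by (simp add: attacks_def)
      thus "a \<noteq> d" using NT inadg(1,4) unfolding nonattacking_def a_def d_def by blast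
      have "U (i, h) \<noteq> U (i+1, h+1)" using NU inadg(1,4) \<open>attacks (i, h) (i+1, h+1)\<close>
        unfolding nonattacking_def by blast
      thus "b \<noteq> d" unfolding Uvals(1) Uvals(4) .
    qed
    have R: "(\<Prod>v\<in>AR. EE tQ c (T v) a * EE tQ d (T v) b) * tQ^(A*(chn c b + chn d a))
           = (\<Prod>v\<in>AR. EE tQ c (T v) b * EE tQ d (T v) a) * tQ^(A*(chn c a + chn d b))"
      unfolding A_def by (rule prodR[OF finAR])
    have nz: "qQ \<noteq> 0" "tQ \<noteq> 0" "1 - qQ^(l+1)*tQ^(A+2) \<noteq> 0"
      using qQ_nz tQ_nz den_nz[of "l+1" "A+2"] by simp_all
    have C: "XL qQ tQ l A c b d a (\<Prod>v\<in>AR. EE tQ c (T v) b * EE tQ d (T v) a) * (1 - rhoL qQ tQ b a c d A l)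
       = XL qQ tQ l A c a d b (\<Prod>v\<in>AR. EE tQ c (T v) a * EE tQ d (T v) b) * (1 - rhoL qQ tQ a b c d A l)"
      by (rule core[OF nz ne R])
    show ?thesis
      unfolding wtF[of U] wtF[of T] P0 WT WU rT rU using C by (simp add: mult.assoc)
  qed
qed

end
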